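(* Let $\Omega_1,\Omega_2\subseteq\mathbb H$ be symmetric slice domains and $f:\Omega_1\to\Omega_2$ slice regular. Then: (i) $f^c$ is regular on $\Omega_1$ and $f^c(\Omega_1)\subseteq\Omega_2$; (ii) $f^c:\Omega_1\to\Omega_2$ is bijective if and only if $f:\Omega_1\to\Omega_2$ is; (iii) for all $x,y\in\mathbb R$ with $x+y\mathbb S\subseteq\Omega_1$, $\sup_{I\in\mathbb S}|f(x+yI)|=\sup_{I\in\mathbb S}|f^c(x+yI)|$ and $\inf_{I\in\mathbb S}|f(x+yI)|=\inf_{I\in\mathbb S}|f^c(x+yI)|$; (iv) $\sup_{q\in\Omega_1}|f(q)|=\sup_{q\in\Omega_1}|f^c(q)|$ and $\inf_{q\in\Omega_1}|f(q)|=\inf_{q\in\Omega_1}|f^c(q)|$.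
   Context: $\mathbb H$ quaternions, $\mathbb S=\{q:q^2=-1\}$, $\mathbb C_I=\mathbb R+I\mathbb R$, $\Omega_I=\Omega\cap\mathbb C_I$. Slice regular: $C^1$ on each $\Omega_I$ and annihilated by $\frac12(\partial_x+I\partial_y)$. Symmetric slice domain: a domain $\Omega$ meeting the real axis, each $\Omega_I$ a domain in $\mathbb C_I$, and $x+yI\in\Omega\Rightarrow x+y\mathbb S\subseteq\Omega$. Regular extension of $h$ holomorphic on $\Omega_I$: $\mathrm{ext}(h)(x+yJ)=\frac12(h(x+yI)+h(x-yI))+\frac12JI(h(x-yI)-h(x+yI))$. For fixed $I$ and $J\in\mathbb S$, $J\perp I$, a regular $f$ splits as $f_I=F+GJ$ with $F,G:\Omega_I\to\mathbb C_I$ holomorphic; the regular conjugate is $f^c=\mathrm{ext}\big(\overline{F(\bar z)}-G(z)J\big)$ (for $f=\sum q^na_n$, $f^c=\sum q^n\bar a_n$). *)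

theory Defs
  imports "HOL-Analysis.Analysis"
begin

datatype quat = Quat (Re: real) (Im1: real) (Im2: real) (Im3: real)

lemma quat_eqI [intro?]:
  "Re x = Re y \<Longrightarrow> Im1 x = Im1 y \<Longrightarrow> Im2 x = Im2 y \<Longrightarrow> Im3 x = Im3 y \<Longrightarrow> x = y"
  by (cases x; cases y) simp

lemma quat_eq_iff:
  "x = y \<longleftrightarrow> Re x = Re y \<and> Im1 x = Im1 y \<and> Im2 x = Im2 y \<and> Im3 x = Im3 y"
  by (auto intro: quat_eqI)

instantiation quat :: real_vector
begin
definition "0 = Quat 0 0 0 0"
definition "x + y = Quat (Re x + Re y) (Im1 x + Im1 y) (Im2 x + Im2 y) (Im3 x + Im3 y)"
definition "- x = Quat (- Re x) (- Im1 x) (- Im2 x) (- Im3 x)"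
definition "x - y = Quat (Re x - Re y) (Im1 x - Im1 y) (Im2 x - Im2 y) (Im3 x - Im3 y)"
definition "scaleR r x = Quat (r * Re x) (r * Im1 x) (r * Im2 x) (r * Im3 x)"
instance
  by standard (simp_all add: quat_eq_iff zero_quat_def plus_quat_def uminus_quat_def
      minus_quat_def scaleR_quat_def algebra_simps)
end

instantiation quat :: real_normed_vector
begin
definition "norm x = sqrt ((Re x)\<^sup>2 + (Im1 x)\<^sup>2 + (Im2 x)\<^sup>2 + (Im3 x)\<^sup>2)"
definition "sgn (x::quat) = x /\<^sub>R norm x"
definition "dist (x::quat) y = norm (x - y)"
definition "uniformity = (INF e\<in>{0<..}. principal {(x::quat, y). dist x y < e})"
definition "open (U :: quat set) \<longleftrightarrow> (\<forall>x\<in>U. \<forall>\<^sub>F (x', y) in uniformity. x' = x \<longrightarrow> y \<in> U)"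
instance
proof
  fix r :: real and x y :: quat and S :: "quat set"
  show "(norm x = 0) = (x = 0)"
    by (simp add: norm_quat_def quat_eq_iff zero_quat_def add_nonneg_eq_0_iff)
  have "sqrt ((Re x + Re y)\<^sup>2 + (Im1 x + Im1 y)\<^sup>2 + (Im2 x + Im2 y)\<^sup>2 + (Im3 x + Im3 y)\<^sup>2)
     \<le> sqrt ((Re x)\<^sup>2 + (Im1 x)\<^sup>2 + (Im2 x)\<^sup>2 + (Im3 x)\<^sup>2) + sqrt ((Re y)\<^sup>2 + (Im1 y)\<^sup>2 + (Im2 y)\<^sup>2 + (Im3 y)\<^sup>2)"
  proof -
    let ?u = "\<lambda>i::nat. [Re x, Im1 x, Im2 x, Im3 x] ! i"
    let ?v = "\<lambda>i::nat. [Re y, Im1 y, Im2 y, Im3 y] ! i"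
    have "L2_set (\<lambda>i. ?u i + ?v i) {0..<4} \<le> L2_set ?u {0..<4} + L2_set ?v {0..<4}"
      by (rule L2_set_triangle_ineq)
    thus ?thesis by (simp add: L2_set_def numeral_eq_Suc add.assoc)
  qed
  thus "norm (x + y) \<le> norm x + norm y"
    by (simp add: norm_quat_def plus_quat_def)
  show "norm (r *\<^sub>R x) = \<bar>r\<bar> * norm x"
    by (simp add: norm_quat_def scaleR_quat_def power_mult_distrib
        distrib_left [symmetric] real_sqrt_mult)
qed (simp_all add: sgn_quat_def dist_quat_def uniformity_quat_def open_quat_def)
end

instantiation quat :: ring_1
begin
definition "1 = Quat 1 0 0 0"
definition "x * y = Quat
   (Re x * Re y - Im1 x * Im1 y - Im2 x * Im2 y - Im3 x * Im3 y)
   (Re x * Im1 y + Im1 x * Re y + Im2 x * Im3 y - Im3 x * Im2 y)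
   (Re x * Im2 y - Im1 x * Im3 y + Im2 x * Re y + Im3 x * Im1 y)
   (Re x * Im3 y + Im1 x * Im2 y - Im2 x * Im1 y + Im3 x * Re y)"
instance
  by standard (simp_all add: quat_eq_iff one_quat_def times_quat_def zero_quat_def
      plus_quat_def algebra_simps)
end

instance quat :: real_algebra_1
  by standard (simp_all add: quat_eq_iff times_quat_def scaleR_quat_def algebra_simps)

definition qi :: quat where "qi = Quat 0 1 0 0"
definition qj :: quat where "qj = Quat 0 0 1 0"

definition imag_units :: "quat set" where
  "imag_units = {q. q * q = - 1}"

definition slice_pt :: "real \<Rightarrow> real \<Rightarrow> quat \<Rightarrow> quat" where
  "slice_pt x y I = of_real x + of_real y * I"

definition slice_plane :: "quat \<Rightarrow> quat set" where
  "slice_plane I = {slice_pt x y I | x y. True}"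

definition symmetric_slice_domain :: "quat set \<Rightarrow> bool" where
  "symmetric_slice_domain \<Omega> \<longleftrightarrow>
     open \<Omega> \<and> connected \<Omega> \<and>
     (\<exists>r::real. of_real r \<in> \<Omega>) \<and>
     (\<forall>I\<in>imag_units. openin (top_of_set (slice_plane I)) (\<Omega> \<inter> slice_plane I)
                        \<and> connected (\<Omega> \<inter> slice_plane I)) \<and>
     (\<forall>x y I J. I \<in> imag_units \<longrightarrow> J \<in> imag_units \<longrightarrow>
                 slice_pt x y I \<in> \<Omega> \<longrightarrow> slice_pt x y J \<in> \<Omega>)"

definition slice_regular :: "quat set \<Rightarrow> (quat \<Rightarrow> quat) \<Rightarrow> bool" where
  "slice_regular \<Omega> f \<longleftrightarrow>
     (\<forall>I\<in>imag_units.
        \<exists>D :: real \<times> real \<Rightarrow> real \<times> real \<Rightarrow> quat.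
          (\<forall>p\<in>{(x, y). slice_pt x y I \<in> \<Omega>}.
             ((\<lambda>(x, y). f (slice_pt x y I)) has_derivative D p) (at p)) \<and>
          continuous_on {(x, y). slice_pt x y I \<in> \<Omega>} (\<lambda>p. D p (1, 0)) \<and>
          continuous_on {(x, y). slice_pt x y I \<in> \<Omega>} (\<lambda>p. D p (0, 1)) \<and>
          (\<forall>p\<in>{(x, y). slice_pt x y I \<in> \<Omega>}. (1/2) *\<^sub>R (D p (1, 0) + I * D p (0, 1)) = 0))"

text \<open>A quaternion \<open>q\<close> is written as \<open>x + yJ\<close> with \<open>x = Re q\<close>, \<open>y = |Im q|\<close> and
  \<open>J = Im q / |Im q|\<close> (any \<open>J\<close>, here \<open>qi\<close>, if \<open>q\<close> is real; the formula does not depend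
  on the choice of representation).\<close>
definition im_part :: "quat \<Rightarrow> quat" where
  "im_part q = Quat 0 (Im1 q) (Im2 q) (Im3 q)"

definition reg_ext :: "quat \<Rightarrow> (quat \<Rightarrow> quat) \<Rightarrow> quat \<Rightarrow> quat" where
  "reg_ext I h q =
     (let x = Re q; y = norm (im_part q);
          J = (if y = 0 then qi else (1 / y) *\<^sub>R im_part q)
      in (1/2) *\<^sub>R (h (slice_pt x y I) + h (slice_pt x (- y) I))
         + (1/2) *\<^sub>R (J * I * (h (slice_pt x (- y) I) - h (slice_pt x y I))))"

text \<open>Regular conjugate, with the fixed choice \<open>I = i\<close>, \<open>J = j\<close>: on \<open>\<complex>\<^sub>i\<close> write
  \<open>f = F + G j\<close> with \<open>F, G\<close> \<open>\<complex>\<^sub>i\<close>-valued, i.e. for \<open>f(z) = a + b i + c j + d k\<close>,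
  \<open>F(z) = a + b i\<close>, \<open>G(z) = c + d i\<close>; then \<open>f^c = ext(conj(F(conj z)) - G(z) j)\<close>.\<close>
definition split_F :: "quat \<Rightarrow> quat" where
  "split_F q = Quat (Re q) (Im1 q) 0 0"
definition split_G :: "quat \<Rightarrow> quat" where
  "split_G q = Quat (Im2 q) (Im3 q) 0 0"
definition qcnj :: "quat \<Rightarrow> quat" where
  "qcnj q = Quat (Re q) (- Im1 q) (- Im2 q) (- Im3 q)"

definition reg_conj :: "(quat \<Rightarrow> quat) \<Rightarrow> quat \<Rightarrow> quat" where
  "reg_conj f = reg_ext qi (\<lambda>z. qcnj (split_F (f (qcnj z))) - split_G (f z) * qj)"

end

theory Submission
  imports Defs "HOL-Complex_Analysis.Conformal_Mappings"
begin


lemma of_real_quat: "(of_real r :: quat) = Quat r 0 0 0"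
  by (simp add: of_real_def scaleR_quat_def one_quat_def)

lemma Quat_simps[simp]:
  "Quat a b c d + Quat a' b' c' d' = Quat (a+a') (b+b') (c+c') (d+d')"
  "Quat a b c d - Quat a' b' c' d' = Quat (a-a') (b-b') (c-c') (d-d')"
  "- Quat a b c d = Quat (-a) (-b) (-c) (-d)"
  "r *\<^sub>R Quat a b c d = Quat (r*a) (r*b) (r*c) (r*d)"
  by (simp_all add: plus_quat_def minus_quat_def uminus_quat_def scaleR_quat_def)

lemma quat_comp_simps[simp]:
  "quat.Re (x+y) = quat.Re x + quat.Re y" "Im1 (x+y) = Im1 x + Im1 y" "Im2 (x+y) = Im2 x + Im2 y" "Im3 (x+y) = Im3 x + Im3 y"
  "quat.Re (x-y) = quat.Re x - quat.Re y" "Im1 (x-y) = Im1 x - Im1 y" "Im2 (x-y) = Im2 x - Im2 y" "Im3 (x-y) = Im3 x - Im3 y"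
  "quat.Re (-x) = - quat.Re x" "Im1 (-x) = - Im1 x" "Im2 (-x) = - Im2 x" "Im3 (-x) = - Im3 x"
  "quat.Re (r *\<^sub>R x) = r * quat.Re x" "Im1 (r *\<^sub>R x) = r * Im1 x" "Im2 (r *\<^sub>R x) = r * Im2 x" "Im3 (r *\<^sub>R x) = r * Im3 x"
  "quat.Re 0 = 0" "Im1 0 = 0" "Im2 0 = 0" "Im3 0 = 0"
  "quat.Re 1 = 1" "Im1 1 = 0" "Im2 1 = 0" "Im3 1 = 0"
  by (simp_all add: plus_quat_def minus_quat_def uminus_quat_def scaleR_quat_def zero_quat_def one_quat_def)

lemma quat_expand: "q = Quat (quat.Re q) (Im1 q) (Im2 q) (Im3 q)" by simp

lemma norm_qmult: "norm (p * q :: quat) = norm p * norm q"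
proof -
  have "(quat.Re p * quat.Re q - Im1 p * Im1 q - Im2 p * Im2 q - Im3 p * Im3 q)\<^sup>2 +
    (quat.Re p * Im1 q + Im1 p * quat.Re q + Im2 p * Im3 q - Im3 p * Im2 q)\<^sup>2 +
    (quat.Re p * Im2 q - Im1 p * Im3 q + Im2 p * quat.Re q + Im3 p * Im1 q)\<^sup>2 +
    (quat.Re p * Im3 q + Im1 p * Im2 q - Im2 p * Im1 q + Im3 p * quat.Re q)\<^sup>2
   = ((quat.Re p)\<^sup>2 + (Im1 p)\<^sup>2 + (Im2 p)\<^sup>2 + (Im3 p)\<^sup>2) * ((quat.Re q)\<^sup>2 + (Im1 q)\<^sup>2 + (Im2 q)\<^sup>2 + (Im3 q)\<^sup>2)"
    by algebra
  thus ?thesis by (simp add: norm_quat_def times_quat_def real_sqrt_mult[symmetric])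
qed

lemma imag_units_iff: "J \<in> imag_units \<longleftrightarrow> quat.Re J = 0 \<and> (Im1 J)\<^sup>2 + (Im2 J)\<^sup>2 + (Im3 J)\<^sup>2 = 1"
proof
  assume "J \<in> imag_units"
  hence e: "J * J = -1" by (simp add: imag_units_def)
  hence e1: "quat.Re J * quat.Re J - Im1 J * Im1 J - Im2 J * Im2 J - Im3 J * Im3 J = -1"
    and e2: "quat.Re J * Im1 J = 0" "quat.Re J * Im2 J = 0" "quat.Re J * Im3 J = 0"
    by (auto simp: quat_eq_iff times_quat_def one_quat_def algebra_simps)
  show "quat.Re J = 0 \<and> (Im1 J)\<^sup>2 + (Im2 J)\<^sup>2 + (Im3 J)\<^sup>2 = 1"
  proof (cases "quat.Re J = 0")
    case True thus ?thesis using e1 by (simp add: power2_eq_square)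
  next
    case False
    hence "Im1 J = 0" "Im2 J = 0" "Im3 J = 0" using e2 by auto
    hence "quat.Re J * quat.Re J = -1" using e1 by simp
    moreover have "quat.Re J * quat.Re J \<ge> 0" by simp
    ultimately show ?thesis by linarith
  qed
next
  assume "quat.Re J = 0 \<and> (Im1 J)\<^sup>2 + (Im2 J)\<^sup>2 + (Im3 J)\<^sup>2 = 1"
  thus "J \<in> imag_units"
    by (auto simp: imag_units_def quat_eq_iff times_quat_def one_quat_def power2_eq_square algebra_simps)
qed

lemma imag_unit_sq: "J \<in> imag_units \<Longrightarrow> J * (J * x) = - x"
  by (simp add: mult.assoc[symmetric] imag_units_def)

lemma imag_unit_norm: "J \<in> imag_units \<Longrightarrow> norm J = 1"
  by (simp add: imag_units_iff norm_quat_def)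

lemma qi_unit: "qi \<in> imag_units" by (simp add: imag_units_iff qi_def)

lemma slice_pt_Quat: "slice_pt x y I = Quat (x + y * quat.Re I) (y * Im1 I) (y * Im2 I) (y * Im3 I)"
  by (simp add: slice_pt_def of_real_quat times_quat_def)

lemma qcnj_mult: "qcnj (p * q) = qcnj q * qcnj p"
  by (simp add: qcnj_def times_quat_def quat_eq_iff algebra_simps)

lemma qcnj_add: "qcnj (p + q) = qcnj p + qcnj q"
  by (simp add: qcnj_def plus_quat_def)
lemma qcnj_diff: "qcnj (p - q) = qcnj p - qcnj q"
  by (simp add: qcnj_def minus_quat_def)
lemma qcnj_scaleR: "qcnj (r *\<^sub>R p) = r *\<^sub>R qcnj p"
  by (simp add: qcnj_def scaleR_quat_def)
lemma qcnj_qcnj[simp]: "qcnj (qcnj p) = p"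
  by (simp add: qcnj_def)
lemma qcnj_imag: "J \<in> imag_units \<Longrightarrow> qcnj J = - J"
  by (simp add: qcnj_def imag_units_iff quat_eq_iff)
lemma mult_qcnj: "q * qcnj q = of_real ((norm q)\<^sup>2)"
  by (simp add: qcnj_def times_quat_def of_real_quat norm_quat_def quat_eq_iff algebra_simps power2_eq_square)
lemma qcnj_mult_self: "qcnj q * q = of_real ((norm q)\<^sup>2)"
  by (simp add: qcnj_def times_quat_def of_real_quat norm_quat_def quat_eq_iff algebra_simps power2_eq_square)
lemma norm_qcnj: "norm (qcnj q) = norm q"
  by (simp add: qcnj_def norm_quat_def)

lemma bounded_linear_qmult_left: "bounded_linear (\<lambda>q. a * (q::quat))"
  by (rule bounded_linear_intro[where K="norm a"])
     (simp_all add: distrib_left norm_qmult mult.commute)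



lemma qi_sq: "qi * (qi * x) = - x"
  using imag_unit_sq[OF qi_unit] .

lemma ext_cr_alg:
  fixes a1 a2 b1 b2 :: quat
  assumes J: "J \<in> imag_units" and h1: "a1 + qi * b1 = 0" and h2: "a2 - qi * b2 = 0"
  shows "((1/2) *\<^sub>R (a1 + a2) + (1/2) *\<^sub>R (J * qi * (a2 - a1)))
       + J * ((1/2) *\<^sub>R (b1 + b2) + (1/2) *\<^sub>R (J * qi * (b2 - b1))) = 0"
proof -
  have a1: "a1 = - (qi * b1)" using h1 by (simp add: eq_neg_iff_add_eq_0)
  have a2: "a2 = qi * b2" using h2 by simp
  show ?thesis
    unfolding a1 a2
    by (simp add: algebra_simps mult.assoc qi_sq imag_unit_sq[OF J] scaleR_right_diff_distrib)
qed



definition sig :: "real \<times> real \<Rightarrow> real \<times> real" where "sig p = (fst p, - snd p)"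

lemma sig_sig[simp]: "sig (sig p) = p" by (simp add: sig_def)
lemma sig_simps[simp]: "sig (1,0) = (1,0)" "sig (0,1) = - (0,1)" "sig (x,y) = (x,-y)"
  by (simp_all add: sig_def)

lemma bounded_linear_sig: "bounded_linear sig"
  unfolding sig_def by (intro bounded_linear_Pair bounded_linear_fst bounded_linear_minus bounded_linear_snd)

lemma sig_deriv:
  assumes "(k has_derivative K) (at (sig p))"
  shows "((\<lambda>p. k (sig p)) has_derivative (\<lambda>v. K (sig v))) (at p)"
  using has_derivative_compose[OF bounded_linear_imp_has_derivative[OF bounded_linear_sig] assms] .

lemma sig_anti_cr:
  assumes "(k has_derivative K) (at (sig p))" "K (1,0) + qi * K (0,1) = 0"
  shows "K (sig (1,0)) - qi * K (sig (0,1)) = 0"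
proof -
  have "linear K" using has_derivative_linear[OF assms(1)] .
  hence "K (- (0,1)) = - K (0,1)" by (rule linear_neg)
  thus ?thesis using assms(2) by simp
qed

lemma ext_cr:
  assumes J: "J \<in> imag_units"
    and d1: "(k1 has_derivative K1) (at p)" and c1: "K1 (1,0) + qi * K1 (0,1) = 0"
    and d2: "(k2 has_derivative K2) (at p)" and c2: "K2 (1,0) - qi * K2 (0,1) = 0"
  shows "((\<lambda>p. (1/2) *\<^sub>R (k1 p + k2 p) + (1/2) *\<^sub>R (J * qi * (k2 p - k1 p)))
          has_derivative (\<lambda>v. (1/2) *\<^sub>R (K1 v + K2 v) + (1/2) *\<^sub>R (J * qi * (K2 v - K1 v)))) (at p)"
    and "((1/2) *\<^sub>R (K1 (1,0) + K2 (1,0)) + (1/2) *\<^sub>R (J * qi * (K2 (1,0) - K1 (1,0))))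
       + J * ((1/2) *\<^sub>R (K1 (0,1) + K2 (0,1)) + (1/2) *\<^sub>R (J * qi * (K2 (0,1) - K1 (0,1)))) = 0"
proof -
  show "((\<lambda>p. (1/2) *\<^sub>R (k1 p + k2 p) + (1/2) *\<^sub>R (J * qi * (k2 p - k1 p)))
          has_derivative (\<lambda>v. (1/2) *\<^sub>R (K1 v + K2 v) + (1/2) *\<^sub>R (J * qi * (K2 v - K1 v)))) (at p)"
    by (intro has_derivative_add has_derivative_scaleR_right has_derivative_diff d1 d2
          bounded_linear.has_derivative[OF bounded_linear_qmult_left])
  show "((1/2) *\<^sub>R (K1 (1,0) + K2 (1,0)) + (1/2) *\<^sub>R (J * qi * (K2 (1,0) - K1 (1,0))))
       + J * ((1/2) *\<^sub>R (K1 (0,1) + K2 (0,1)) + (1/2) *\<^sub>R (J * qi * (K2 (0,1) - K1 (0,1)))) = 0"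
    by (rule ext_cr_alg[OF J c1 c2])
qed



definition reim :: "complex \<Rightarrow> real \<times> real" where "reim z = (Complex.Re z, Complex.Im z)"

lemma bounded_linear_reim: "bounded_linear reim"
  unfolding reim_def by (intro bounded_linear_Pair bounded_linear_Re bounded_linear_Im)

lemma lin_pair: "linear L \<Longrightarrow> L (a, b) = a *\<^sub>R L (1,0) + b *\<^sub>R L (0,1)"
proof -
  assume L: "linear L"
  have "(a, b) = a *\<^sub>R (1,0) + b *\<^sub>R ((0,1)::real\<times>real)" by simp
  hence "L (a,b) = L (a *\<^sub>R (1,0) + b *\<^sub>R (0,1))" by metis
  also have "\<dots> = L (a *\<^sub>R (1,0)) + L (b *\<^sub>R (0,1))" by (rule linear_add[OF L])
  also have "\<dots> = a *\<^sub>R L (1,0) + b *\<^sub>R L (0,1)"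
    by (simp only: linear_scale[OF L])
  finally show ?thesis .
qed

lemma cr_holo_component:
  fixes c :: "quat \<Rightarrow> real"
  assumes c: "bounded_linear c" and J: "J \<in> imag_units"
    and d: "(d has_derivative D) (at (reim z))" and cr: "D (1,0) + J * D (0,1) = 0"
  shows "(\<lambda>z. Complex (c (d (reim z))) (- c (J * d (reim z)))) field_differentiable (at z)"
proof -
  define M where "M q = complex_of_real (c q) + \<i> * complex_of_real (- c (J * q))" for q
  have Mc: "M q = Complex (c q) (- c (J * q))" for q by (simp add: M_def Complex_eq)
  have bM: "bounded_linear M"
    unfolding M_def
    by (intro bounded_linear_add bounded_linear_compose[OF bounded_linear_of_real] c
        bounded_linear_compose[OF bounded_linear_mult_right] bounded_linear_minus
        bounded_linear_compose[OF c bounded_linear_qmult_left])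
  have der: "((\<lambda>z. M (d (reim z))) has_derivative (\<lambda>h. M (D (reim h)))) (at z)"
    by (rule bounded_linear.has_derivative[OF bM has_derivative_compose[OF bounded_linear_imp_has_derivative[OF bounded_linear_reim] d]])
  have linD: "linear D" using has_derivative_linear[OF d] .
  have D01: "D (0,1) = J * D (1,0)"
  proof -
    have "D (1,0) = - (J * D (0,1))" using cr by (simp add: eq_neg_iff_add_eq_0)
    hence "J * D (1,0) = - (J * (J * D (0,1)))" by (simp add: mult_minus_right)
    thus ?thesis using imag_unit_sq[OF J] by simp
  qed
  have lc: "linear c" using c bounded_linear.linear by blast
  have eq: "M (D (reim h)) = M (D (1,0)) * h" for h
  proof -
    define u where "u = D (1,0)"
    define a where "a = Complex.Re h"
    define b where "b = Complex.Im h"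
    have 1: "D (reim h) = a *\<^sub>R u + b *\<^sub>R (J * u)"
      unfolding reim_def a_def b_def u_def by (subst lin_pair[OF linD]) (simp only: D01)
    have 2: "J * (a *\<^sub>R u + b *\<^sub>R (J * u)) = a *\<^sub>R (J * u) - b *\<^sub>R u"
      by (simp add: distrib_left imag_unit_sq[OF J])
    have 3: "c (a *\<^sub>R u + b *\<^sub>R (J * u)) = a * c u + b * c (J * u)"
      using lc by (simp only: linear_add linear_scale real_scaleR_def)
    have 4: "c (a *\<^sub>R (J * u) - b *\<^sub>R u) = a * c (J * u) - b * c u"
      using lc by (simp only: linear_diff linear_scale real_scaleR_def)
    have h: "h = Complex a b" by (simp add: a_def b_def)
    show ?thesis
      unfolding Mc 1 2 3 4
      by (simp add: complex_eq_iff algebra_simps a_def b_def u_def)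
  qed
  have "((\<lambda>z. M (d (reim z))) has_derivative (\<lambda>h. M (D (1,0)) * h)) (at z)"
    using der by (simp add: eq)
  hence "((\<lambda>z. M (d (reim z))) has_field_derivative M (D (1,0))) (at z)"
    unfolding has_field_derivative_def by simp
  thus ?thesis unfolding Mc[symmetric] field_differentiable_def by blast
qed



lemma comp_le_norm:
  "\<bar>quat.Re x\<bar> \<le> norm x" "\<bar>Im1 x\<bar> \<le> norm x" "\<bar>Im2 x\<bar> \<le> norm x" "\<bar>Im3 x\<bar> \<le> norm x"
  unfolding norm_quat_def
  by (rule real_le_rsqrt; simp)+

lemma bl_comps: "bounded_linear quat.Re" "bounded_linear Im1" "bounded_linear Im2" "bounded_linear Im3"
  by (rule bounded_linear_intro[where K=1]; simp add: comp_le_norm)+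

lemma slice_identity:
  fixes d :: "real \<times> real \<Rightarrow> quat"
  assumes J: "J \<in> imag_units" and oU: "open U" and cU: "connected U" and r: "(r,0) \<in> U"
    and z0: "\<And>x. (x,0) \<in> U \<Longrightarrow> d (x,0) = 0"
    and der: "\<And>p. p \<in> U \<Longrightarrow> (d has_derivative D p) (at p) \<and> D p (1,0) + J * D p (0,1) = 0"
    and p: "p \<in> U"
  shows "d p = 0"
proof -
  define S where "S = reim -` U"
  have cont_reim: "continuous_on UNIV reim"
    using bounded_linear_reim linear_continuous_on by blast
  have oS: "open S" unfolding S_def
    by (rule open_vimage[OF oU]) (simp add: bounded_linear_reim linear_continuous_at continuous_at_imp_continuous_on)
  have SU: "S = (\<lambda>p. Complex (fst p) (snd p)) ` U"
    unfolding S_def by (auto simp: reim_def image_iff) (metis complex.collapse fst_conv snd_conv)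
  have cS: "connected S" unfolding SU
    by (rule connected_continuous_image[OF _ cU]) (auto simp: Complex_eq intro!: continuous_intros)
  have reimC: "reim (Complex a b) = (a, b)" for a b by (simp add: reim_def)
  have comp: "c (d p) = 0" if c: "bounded_linear c" for c :: "quat \<Rightarrow> real"
  proof -
    define \<phi> where "\<phi> z = Complex (c (d (reim z))) (- c (J * d (reim z)))" for z
    have hol: "\<phi> holomorphic_on S"
      unfolding holomorphic_on_def
    proof
      fix z assume "z \<in> S"
      hence "reim z \<in> U" by (simp add: S_def)
      from der[OF this] have "\<phi> field_differentiable (at z)"
        unfolding \<phi>_def using cr_holo_component[OF c J] by blast
      thus "\<phi> field_differentiable (at z within S)" by (rule field_differentiable_at_within)
    qed
    define U' where "U' = {z \<in> S. Complex.Im z = 0}"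
    have xiS: "complex_of_real r \<in> S" using r by (simp add: S_def reim_def)
    have lim: "complex_of_real r islimpt U'"
    proof -
      obtain e where e: "e > 0" "ball (complex_of_real r) e \<subseteq> S"
        using oS xiS open_contains_ball by blast
      show ?thesis
      proof (rule islimpt_approachable[THEN iffD2], intro allI impI)
        fix e' :: real assume e': "e' > 0"
        define t where "t = min e e' / 2"
        have t: "t > 0" "t < e" "t < e'" using e e' by (auto simp: t_def)
        have "complex_of_real (r + t) \<in> ball (complex_of_real r) e"
          using t by (simp add: dist_norm)
        hence "complex_of_real (r + t) \<in> U'" using e by (auto simp: U'_def)
        moreover have "complex_of_real (r + t) \<noteq> complex_of_real r" using t by simp
        moreover have "dist (complex_of_real (r + t)) (complex_of_real r) < e'"
          using t by (simp add: dist_norm)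
        ultimately show "\<exists>x'\<in>U'. x' \<noteq> complex_of_real r \<and> dist x' (complex_of_real r) < e'" by blast
      qed
    qed
    have zero: "\<phi> z = 0" if "z \<in> U'" for z
    proof -
      have "reim z = (Complex.Re z, 0)" "(Complex.Re z, 0) \<in> U"
        using that by (auto simp: U'_def S_def reim_def)
      hence "d (reim z) = 0" using z0 by simp
      thus ?thesis by (simp add: \<phi>_def linear_simps(3)[OF c] complex_eq_iff)
    qed
    have wS: "Complex (fst p) (snd p) \<in> S" using p by (simp add: S_def reim_def)
    have "\<phi> (Complex (fst p) (snd p)) = 0"
      by (rule analytic_continuation[OF hol oS cS _ xiS lim zero wS]) (auto simp: U'_def)
    thus ?thesis by (simp add: \<phi>_def reimC complex_eq_iff)
  qed
  show ?thesis using comp[OF bl_comps(1)] comp[OF bl_comps(2)] comp[OF bl_comps(3)] comp[OF bl_comps(4)]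
    by (simp add: quat_eq_iff)
qed



lemma imag_parts: "J \<in> imag_units \<Longrightarrow> quat.Re J = 0" by (simp add: imag_units_iff)

lemma slice_pt_unit: "J \<in> imag_units \<Longrightarrow> slice_pt x y J = Quat x (y * Im1 J) (y * Im2 J) (y * Im3 J)"
  by (simp add: slice_pt_Quat imag_units_iff)

lemma slice_pt_neg: "slice_pt x y (- I) = slice_pt x (- y) I"
  by (simp add: slice_pt_Quat)

lemma slice_pt_real: "slice_pt x 0 J = of_real x"
  by (simp add: slice_pt_def)

lemma im_part_slice: "J \<in> imag_units \<Longrightarrow> im_part (slice_pt x y J) = y *\<^sub>R J"
  by (simp add: slice_pt_unit im_part_def imag_units_iff quat_eq_iff)

lemma norm_scaleR_unit: assumes "J \<in> imag_units" shows "norm (y *\<^sub>R J) = \<bar>y\<bar>"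
  using imag_unit_norm[OF assms] by simp

lemma reg_ext_slice:
  assumes J: "J \<in> imag_units"
  shows "reg_ext I h (slice_pt x y J) =
     (1/2) *\<^sub>R (h (slice_pt x y I) + h (slice_pt x (- y) I))
         + (1/2) *\<^sub>R (J * I * (h (slice_pt x (- y) I) - h (slice_pt x y I)))"
proof -
  have re: "quat.Re (slice_pt x y J) = x" using J by (simp add: slice_pt_unit)
  have im: "im_part (slice_pt x y J) = y *\<^sub>R J" by (rule im_part_slice[OF J])
  have nm: "norm (y *\<^sub>R J) = \<bar>y\<bar>" by (rule norm_scaleR_unit[OF J])
  consider "y > 0" | "y < 0" | "y = 0" by linarith
  thus ?thesis
  proof cases
    case 1
    thus ?thesis unfolding reg_ext_def Let_def re im nm by simp
  next
    case 2
    have "(1 / \<bar>y\<bar>) *\<^sub>R y *\<^sub>R J = - J" using 2 by simp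
    moreover have "(- J) * I * (a - b) = J * I * (b - a)" for a b :: quat
      by (simp add: algebra_simps)
    ultimately show ?thesis using 2 unfolding reg_ext_def Let_def re im nm
      by (simp add: algebra_simps)
  next
    case 3
    thus ?thesis unfolding reg_ext_def Let_def re im nm by (simp add: scaleR_add_right[symmetric])
  qed
qed

lemma slice_rep:
  "\<exists>K\<in>imag_units. q = slice_pt (quat.Re q) (norm (im_part q)) K"
proof (cases "norm (im_part q) = 0")
  case True
  hence "im_part q = 0" by simp
  hence "q = slice_pt (quat.Re q) (norm (im_part q)) qi"
    by (simp add: slice_pt_Quat im_part_def quat_eq_iff zero_quat_def)
  thus ?thesis using qi_unit by blast
next
  case False
  define y where "y = norm (im_part q)"
  have y: "y > 0" using False y_def by simp
  define K where "K = (1/y) *\<^sub>R im_part q"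
  have ys: "y\<^sup>2 = (Im1 q)\<^sup>2 + (Im2 q)\<^sup>2 + (Im3 q)\<^sup>2"
    by (simp add: y_def norm_quat_def im_part_def)
  have "(Im1 q/y)\<^sup>2 + (Im2 q/y)\<^sup>2 + (Im3 q/y)\<^sup>2 = ((Im1 q)\<^sup>2 + (Im2 q)\<^sup>2 + (Im3 q)\<^sup>2)/y\<^sup>2"
    by (simp add: power_divide add_divide_distrib)
  also have "\<dots> = 1" using y by (simp add: ys[symmetric])
  finally have s1: "(Im1 q/y)\<^sup>2 + (Im2 q/y)\<^sup>2 + (Im3 q/y)\<^sup>2 = 1" .
  have "K = Quat 0 (Im1 q/y) (Im2 q/y) (Im3 q/y)"
    by (simp add: K_def im_part_def)
  hence "K \<in> imag_units"
    unfolding imag_units_iff using s1 by simp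
  moreover have "q = slice_pt (quat.Re q) y K"
    using y by (simp add: K_def slice_pt_Quat im_part_def quat_eq_iff)
  ultimately show ?thesis unfolding y_def by blast
qed

lemma norm_im_slice: assumes "J \<in> imag_units" shows "norm (im_part (slice_pt x y J)) = \<bar>y\<bar>"
  by (simp add: im_part_slice[OF assms] imag_unit_norm[OF assms])

lemma re_slice: "J \<in> imag_units \<Longrightarrow> quat.Re (slice_pt x y J) = x"
  by (simp add: slice_pt_unit)

lemma slice_pt_inj:
  assumes "J \<in> imag_units" "J' \<in> imag_units" "y \<ge> 0" "y' \<ge> 0"
    and e: "slice_pt x y J = slice_pt x' y' J'"
  shows "x = x' \<and> y = y' \<and> (y \<noteq> 0 \<longrightarrow> J = J')"
proof -
  have "x = x'" using e re_slice[OF assms(1)] re_slice[OF assms(2)] by metis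
  moreover have yy: "y = y'" using e norm_im_slice[OF assms(1)] norm_im_slice[OF assms(2)] assms(3,4)
    by (metis abs_of_nonneg)
  moreover have "y \<noteq> 0 \<longrightarrow> J = J'"
  proof
    assume "y \<noteq> 0"
    have "y *\<^sub>R J = y *\<^sub>R J'" using e im_part_slice[OF assms(1)] im_part_slice[OF assms(2)] yy by metis
    thus "J = J'" using \<open>y \<noteq> 0\<close> by simp
  qed
  ultimately show ?thesis by blast
qed

lemma ssd_sym: "symmetric_slice_domain \<Omega> \<Longrightarrow> I \<in> imag_units \<Longrightarrow> J \<in> imag_units \<Longrightarrow>
   slice_pt x y I \<in> \<Omega> \<Longrightarrow> slice_pt x y J \<in> \<Omega>"
  unfolding symmetric_slice_domain_def by blast

lemma ssd_neg: "symmetric_slice_domain \<Omega> \<Longrightarrow> I \<in> imag_units \<Longrightarrow> J \<in> imag_units \<Longrightarrow>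
   slice_pt x y I \<in> \<Omega> \<Longrightarrow> slice_pt x (- y) J \<in> \<Omega>"
proof -
  assume a: "symmetric_slice_domain \<Omega>" "I \<in> imag_units" "J \<in> imag_units" "slice_pt x y I \<in> \<Omega>"
  have "- J \<in> imag_units" using a(3) by (simp add: imag_units_def)
  from ssd_sym[OF a(1,2) this a(4)] show ?thesis by (simp add: slice_pt_neg)
qed

lemma qcnj_in:
  assumes "symmetric_slice_domain \<Omega>" "q \<in> \<Omega>"
  shows "qcnj q \<in> \<Omega>"
proof -
  obtain K where K: "K \<in> imag_units" "q = slice_pt (quat.Re q) (norm (im_part q)) K"
    using slice_rep by blast
  have "qcnj q = slice_pt (quat.Re q) (- norm (im_part q)) K"
    using K by (metis qcnj_def slice_pt_unit quat.sel mult_minus_left)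
  thus ?thesis using ssd_neg[OF assms(1) K(1) K(1)] K assms(2) by metis
qed

lemma bl_slice: "bounded_linear (\<lambda>p::real\<times>real. slice_pt (fst p) (snd p) J - slice_pt 0 0 J)"
proof -
  have eq: "(\<lambda>p::real\<times>real. slice_pt (fst p) (snd p) J - slice_pt 0 0 J) = (\<lambda>p. of_real (fst p) + snd p *\<^sub>R J)"
    by (simp add: slice_pt_def scaleR_conv_of_real fun_eq_iff)
  show ?thesis unfolding eq
    by (rule bounded_linear_add[OF bounded_linear_compose[OF bounded_linear_of_real bounded_linear_fst]
      bounded_linear_compose[OF bounded_linear_scaleR_left bounded_linear_snd]])
qed

lemma cont_slice: "continuous_on UNIV (\<lambda>p::real\<times>real. slice_pt (fst p) (snd p) J)"
proof -
  have "continuous_on UNIV (\<lambda>p::real\<times>real. (slice_pt (fst p) (snd p) J - slice_pt 0 0 J) + slice_pt 0 0 J)"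
    by (intro continuous_intros linear_continuous_on bl_slice)
  thus ?thesis by simp
qed

lemma open_slice_set:
  assumes "open \<Omega>" shows "open {(x, y). slice_pt x y J \<in> \<Omega>}"
proof -
  have "{(x, y). slice_pt x y J \<in> \<Omega>} = (\<lambda>p. slice_pt (fst p) (snd p) J) -` \<Omega>" by auto
  thus ?thesis using open_vimage[OF assms cont_slice] by simp
qed

lemma connected_slice_set:
  assumes "symmetric_slice_domain \<Omega>" "J \<in> imag_units"
  shows "connected {(x, y). slice_pt x y J \<in> \<Omega>}"
proof -
  define \<psi> where "\<psi> q = (quat.Re q, Im1 q * Im1 J + Im2 q * Im2 J + Im3 q * Im3 J)" for q
  have c: "connected (\<Omega> \<inter> slice_plane J)" using assms unfolding symmetric_slice_domain_def by blast
  have bl: "bounded_linear \<psi>" unfolding \<psi>_def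
    by (intro bounded_linear_Pair bl_comps bounded_linear_add
        bounded_linear_compose[OF bounded_linear_mult_left bl_comps(2)]
        bounded_linear_compose[OF bounded_linear_mult_left bl_comps(3)]
        bounded_linear_compose[OF bounded_linear_mult_left bl_comps(4)])
  have ps: "\<psi> (slice_pt x y J) = (x, y)" for x y
  proof -
    have u: "(Im1 J)\<^sup>2 + (Im2 J)\<^sup>2 + (Im3 J)\<^sup>2 = 1" using assms(2) by (simp add: imag_units_iff)
    have "y * Im1 J * Im1 J + y * Im2 J * Im2 J + y * Im3 J * Im3 J = y * ((Im1 J)\<^sup>2 + (Im2 J)\<^sup>2 + (Im3 J)\<^sup>2)"
      by (simp add: power2_eq_square algebra_simps)
    thus ?thesis using u assms(2) by (simp add: \<psi>_def slice_pt_unit)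
  qed
  have "{(x, y). slice_pt x y J \<in> \<Omega>} = \<psi> ` (\<Omega> \<inter> slice_plane J)"
  proof safe
    fix x y assume "slice_pt x y J \<in> \<Omega>"
    thus "(x, y) \<in> \<psi> ` (\<Omega> \<inter> slice_plane J)"
      by (metis (mono_tags, lifting) IntI image_eqI ps slice_plane_def mem_Collect_eq)
  next
    fix a b q assume "q \<in> \<Omega>" "q \<in> slice_plane J" "(a, b) = \<psi> q"
    thus "slice_pt a b J \<in> \<Omega>" unfolding slice_plane_def using ps by auto
  qed
  thus ?thesis using connected_continuous_image[OF linear_continuous_on[OF bl] c] by simp
qed



lemma case_prod_fst_snd: "(\<lambda>(x, y). g x y) = (\<lambda>p. g (fst p) (snd p))"
  by (simp add: fun_eq_iff split_beta)

lemma slice_regularD: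
  assumes "slice_regular \<Omega> f" "I \<in> imag_units"
  obtains D where
    "\<And>p. slice_pt (fst p) (snd p) I \<in> \<Omega> \<Longrightarrow>
         ((\<lambda>p. f (slice_pt (fst p) (snd p) I)) has_derivative D p) (at p)"
    "continuous_on {(x, y). slice_pt x y I \<in> \<Omega>} (\<lambda>p. D p (1, 0))"
    "continuous_on {(x, y). slice_pt x y I \<in> \<Omega>} (\<lambda>p. D p (0, 1))"
    "\<And>p. slice_pt (fst p) (snd p) I \<in> \<Omega> \<Longrightarrow> D p (1, 0) + I * D p (0, 1) = 0"
proof -
  from assms obtain D where D:
    "\<forall>p\<in>{(x, y). slice_pt x y I \<in> \<Omega>}. ((\<lambda>(x, y). f (slice_pt x y I)) has_derivative D p) (at p)"
    "continuous_on {(x, y). slice_pt x y I \<in> \<Omega>} (\<lambda>p. D p (1, 0))"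
    "continuous_on {(x, y). slice_pt x y I \<in> \<Omega>} (\<lambda>p. D p (0, 1))"
    "\<forall>p\<in>{(x, y). slice_pt x y I \<in> \<Omega>}. (1/2) *\<^sub>R (D p (1, 0) + I * D p (0, 1)) = 0"
    unfolding slice_regular_def by blast
  show ?thesis
  proof (rule that[of D])
    fix p assume "slice_pt (fst p) (snd p) I \<in> \<Omega>"
    hence pin: "p \<in> {(x, y). slice_pt x y I \<in> \<Omega>}" by (cases p) simp
    show "((\<lambda>p. f (slice_pt (fst p) (snd p) I)) has_derivative D p) (at p)"
      using D(1) pin unfolding case_prod_fst_snd by blast
    show "D p (1, 0) + I * D p (0, 1) = 0" using D(4)[rule_format, OF pin] by simp
  qed (use D in auto)
qed

lemma diff_J_comb: "(a - g1) + J * (b - g2) = (a + J * b) - (g1 + J * (g2::quat))"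
  by (simp add: right_diff_distrib distrib_left)

lemma repr_formula:
  assumes ssd: "symmetric_slice_domain \<Omega>" and reg: "slice_regular \<Omega> f"
    and J: "J \<in> imag_units" and xy: "slice_pt x y J \<in> \<Omega>"
  shows "f (slice_pt x y J) = (1/2) *\<^sub>R (f (slice_pt x y qi) + f (slice_pt x (- y) qi))
     + (1/2) *\<^sub>R (J * qi * (f (slice_pt x (- y) qi) - f (slice_pt x y qi)))"
proof -
  obtain Di where Di:
    "\<And>p. slice_pt (fst p) (snd p) qi \<in> \<Omega> \<Longrightarrow>
         ((\<lambda>p. f (slice_pt (fst p) (snd p) qi)) has_derivative Di p) (at p)"
    "continuous_on {(x, y). slice_pt x y qi \<in> \<Omega>} (\<lambda>p. Di p (1, 0))"
    "continuous_on {(x, y). slice_pt x y qi \<in> \<Omega>} (\<lambda>p. Di p (0, 1))"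
    "\<And>p. slice_pt (fst p) (snd p) qi \<in> \<Omega> \<Longrightarrow> Di p (1, 0) + qi * Di p (0, 1) = 0"
    using slice_regularD[OF reg qi_unit] by blast
  obtain DJ where DJ:
    "\<And>p. slice_pt (fst p) (snd p) J \<in> \<Omega> \<Longrightarrow>
         ((\<lambda>p. f (slice_pt (fst p) (snd p) J)) has_derivative DJ p) (at p)"
    "continuous_on {(x, y). slice_pt x y J \<in> \<Omega>} (\<lambda>p. DJ p (1, 0))"
    "continuous_on {(x, y). slice_pt x y J \<in> \<Omega>} (\<lambda>p. DJ p (0, 1))"
    "\<And>p. slice_pt (fst p) (snd p) J \<in> \<Omega> \<Longrightarrow> DJ p (1, 0) + J * DJ p (0, 1) = 0"
    using slice_regularD[OF reg J] by blast
  define U where "U = {(x, y). slice_pt x y J \<in> \<Omega>}"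
  define k1 where "k1 p = f (slice_pt (fst p) (snd p) qi)" for p
  define k2 where "k2 p = k1 (sig p)" for p
  define d where "d p = f (slice_pt (fst p) (snd p) J) -
     ((1/2) *\<^sub>R (k1 p + k2 p) + (1/2) *\<^sub>R (J * qi * (k2 p - k1 p)))" for p
  have oU: "open U" unfolding U_def using ssd open_slice_set symmetric_slice_domain_def by blast
  have cU: "connected U" unfolding U_def using connected_slice_set[OF ssd J] .
  obtain r where r: "of_real r \<in> \<Omega>" using ssd unfolding symmetric_slice_domain_def by blast
  have rU: "(r, 0) \<in> U" using r by (simp add: U_def slice_pt_real)
  have z0: "d (x', 0) = 0" if "(x', 0) \<in> U" for x'
    by (simp add: d_def k1_def k2_def slice_pt_real scaleR_add_right[symmetric])
  have der: "(d has_derivative (\<lambda>v. DJ p v -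
       ((1/2) *\<^sub>R (Di p v + Di (sig p) (sig v)) + (1/2) *\<^sub>R (J * qi * (Di (sig p) (sig v) - Di p v))))) (at p)
     \<and> (DJ p (1,0) -
       ((1/2) *\<^sub>R (Di p (1,0) + Di (sig p) (sig (1,0))) + (1/2) *\<^sub>R (J * qi * (Di (sig p) (sig (1,0)) - Di p (1,0)))))
       + J * (DJ p (0,1) -
       ((1/2) *\<^sub>R (Di p (0,1) + Di (sig p) (sig (0,1))) + (1/2) *\<^sub>R (J * qi * (Di (sig p) (sig (0,1)) - Di p (0,1))))) = 0"
    if pU: "p \<in> U" for p
  proof -
    have pJ: "slice_pt (fst p) (snd p) J \<in> \<Omega>" using pU by (cases p) (simp add: U_def)
    have p1: "slice_pt (fst p) (snd p) qi \<in> \<Omega>" using ssd_sym[OF ssd J qi_unit pJ] .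
    have p2: "slice_pt (fst (sig p)) (snd (sig p)) qi \<in> \<Omega>"
      using ssd_neg[OF ssd J qi_unit pJ] by (simp add: sig_def)
    have d1: "(k1 has_derivative Di p) (at p)" using Di(1)[OF p1] unfolding k1_def .
    have c1: "Di p (1,0) + qi * Di p (0,1) = 0" using Di(4)[OF p1] .
    have d2': "(k1 has_derivative Di (sig p)) (at (sig p))" using Di(1)[OF p2] unfolding k1_def .
    have c2': "Di (sig p) (1,0) + qi * Di (sig p) (0,1) = 0" using Di(4)[OF p2] .
    have d2: "(k2 has_derivative (\<lambda>v. Di (sig p) (sig v))) (at p)"
      unfolding k2_def by (rule sig_deriv[OF d2'])
    have c2: "Di (sig p) (sig (1,0)) - qi * Di (sig p) (sig (0,1)) = 0"
      by (rule sig_anti_cr[OF d2' c2'])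
    note E = ext_cr[OF J d1 c1 d2 c2]
    have dJ: "((\<lambda>p. f (slice_pt (fst p) (snd p) J)) has_derivative DJ p) (at p)" using DJ(1)[OF pJ] .
    have cJ: "DJ p (1,0) + J * DJ p (0,1) = 0" using DJ(4)[OF pJ] .
    show ?thesis
    proof
      show "(d has_derivative (\<lambda>v. DJ p v -
       ((1/2) *\<^sub>R (Di p v + Di (sig p) (sig v)) + (1/2) *\<^sub>R (J * qi * (Di (sig p) (sig v) - Di p v))))) (at p)"
        unfolding d_def by (rule has_derivative_diff[OF dJ E(1)])
      show "(DJ p (1,0) -
       ((1/2) *\<^sub>R (Di p (1,0) + Di (sig p) (sig (1,0))) + (1/2) *\<^sub>R (J * qi * (Di (sig p) (sig (1,0)) - Di p (1,0)))))
       + J * (DJ p (0,1) -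
       ((1/2) *\<^sub>R (Di p (0,1) + Di (sig p) (sig (0,1))) + (1/2) *\<^sub>R (J * qi * (Di (sig p) (sig (0,1)) - Di p (0,1))))) = 0"
        unfolding diff_J_comb cJ E(2) by simp
    qed
  qed
  have "(x, y) \<in> U" using xy by (simp add: U_def)
  from slice_identity[OF J oU cU rU z0 der this] have "d (x, y) = 0" by blast
  thus ?thesis by (simp add: d_def k1_def k2_def sig_def)
qed



definition T1 :: "quat \<Rightarrow> quat" where "T1 q = Quat (quat.Re q) (- Im1 q) 0 0"
definition T2 :: "quat \<Rightarrow> quat" where "T2 q = Quat 0 0 (Im2 q) (Im3 q)"

lemma T1_eq: "qcnj (split_F q) = T1 q" by (simp add: T1_def qcnj_def split_F_def)
lemma T2_eq: "split_G q * qj = T2 q" by (simp add: T2_def split_G_def qj_def times_quat_def)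

lemma bl_T1: "bounded_linear T1"
  by (rule bounded_linear_intro[where K=1])
     (auto simp: T1_def norm_quat_def intro!: real_sqrt_le_mono)
lemma bl_T2: "bounded_linear T2"
  by (rule bounded_linear_intro[where K=1])
     (auto simp: T2_def norm_quat_def intro!: real_sqrt_le_mono)

lemma h_cr_alg:
  assumes "a1 + qi * b1 = 0" "a2 + qi * b2 = 0"
  shows "(T1 a2 - T2 a1) + qi * (T1 (- b2) - T2 b1) = 0"
proof -
  have a1: "a1 = - (qi * b1)" "a2 = - (qi * b2)" using assms by (simp_all add: eq_neg_iff_add_eq_0)
  show ?thesis unfolding a1 by (simp add: quat_eq_iff T1_def T2_def times_quat_def qi_def)
qed

lemma cont_bl: "bounded_linear T \<Longrightarrow> continuous_on S g \<Longrightarrow> continuous_on S (\<lambda>x. T (g x))"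
  by (rule continuous_on_compose2[OF linear_continuous_on[of T UNIV]]) auto

lemma reg_conj_slice:
  fixes f :: "quat \<Rightarrow> quat"
  assumes J: "J \<in> imag_units"
  defines "h \<equiv> \<lambda>p. T1 (f (slice_pt (fst p) (- snd p) qi)) - T2 (f (slice_pt (fst p) (snd p) qi))"
  shows "reg_conj f (slice_pt x y J) = (1/2) *\<^sub>R (h (x,y) + h (sig (x,y))) + (1/2) *\<^sub>R (J * qi * (h (sig (x,y)) - h (x,y)))"
proof -
  have qc: "qcnj (slice_pt a b qi) = slice_pt a (-b) qi" for a b
    by (simp add: qcnj_def slice_pt_Quat qi_def)
  have hq: "(\<lambda>z. qcnj (split_F (f (qcnj z))) - split_G (f z) * qj) (slice_pt a b qi) = h (a,b)" for a b
    by (simp add: h_def T1_eq T2_eq qc)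
  show ?thesis unfolding reg_conj_def reg_ext_slice[OF J] hq by simp
qed

lemma reg_conj_regular:
  assumes ssd: "symmetric_slice_domain \<Omega>" and reg: "slice_regular \<Omega> f"
  shows "slice_regular \<Omega> (reg_conj f)"
  unfolding slice_regular_def
proof
  fix J assume J: "J \<in> imag_units"
  obtain Di where Di:
    "\<And>p. slice_pt (fst p) (snd p) qi \<in> \<Omega> \<Longrightarrow>
         ((\<lambda>p. f (slice_pt (fst p) (snd p) qi)) has_derivative Di p) (at p)"
    "continuous_on {(x, y). slice_pt x y qi \<in> \<Omega>} (\<lambda>p. Di p (1, 0))"
    "continuous_on {(x, y). slice_pt x y qi \<in> \<Omega>} (\<lambda>p. Di p (0, 1))"
    "\<And>p. slice_pt (fst p) (snd p) qi \<in> \<Omega> \<Longrightarrow> Di p (1, 0) + qi * Di p (0, 1) = 0"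
    using slice_regularD[OF reg qi_unit] by blast
  define k where "k p = f (slice_pt (fst p) (snd p) qi)" for p
  define h where "h p = T1 (k (sig p)) - T2 (k p)" for p
  define Hd where "Hd q v = T1 (Di (sig q) (sig v)) - T2 (Di q v)" for q v
  define G where "G p v = (1/2) *\<^sub>R (Hd p v + Hd (sig p) (sig v)) + (1/2) *\<^sub>R (J * qi * (Hd (sig p) (sig v) - Hd p v))" for p v
  define Ui where "Ui = {(x, y). slice_pt x y qi \<in> \<Omega>}"
  define UJ where "UJ = {(x, y). slice_pt x y J \<in> \<Omega>}"
  have inUi: "q \<in> Ui \<longleftrightarrow> slice_pt (fst q) (snd q) qi \<in> \<Omega>" for q by (cases q) (simp add: Ui_def)
  have sigUi: "sig q \<in> Ui" if "q \<in> Ui" for q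
    using ssd_neg[OF ssd qi_unit qi_unit, of "fst q" "snd q"] that by (simp add: inUi sig_def)
  have JUi: "p \<in> Ui" if "p \<in> UJ" for p
    using ssd_sym[OF ssd J qi_unit, of "fst p" "snd p"] that by (cases p) (simp add: Ui_def UJ_def)
  have hfun: "(\<lambda>(x, y). reg_conj f (slice_pt x y J)) =
       (\<lambda>p. (1/2) *\<^sub>R (h p + h (sig p)) + (1/2) *\<^sub>R (J * qi * (h (sig p) - h p)))"
    by (simp add: fun_eq_iff reg_conj_slice[OF J] h_def k_def sig_def)
  have dk: "(k has_derivative Di q) (at q)" if "q \<in> Ui" for q
    using Di(1) that unfolding k_def inUi by blast
  have ck: "Di q (1,0) + qi * Di q (0,1) = 0" if "q \<in> Ui" for q
    using Di(4) that unfolding inUi by blast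
  have dh: "(h has_derivative Hd q) (at q)" if q: "q \<in> Ui" for q
    unfolding h_def Hd_def
    by (intro has_derivative_diff bounded_linear.has_derivative[OF bl_T1] bounded_linear.has_derivative[OF bl_T2]
        sig_deriv dk q sigUi)
  have ch: "Hd q (1,0) + qi * Hd q (0,1) = 0" if q: "q \<in> Ui" for q
  proof -
    have "linear (Di (sig q))" using has_derivative_linear[OF dk[OF sigUi[OF q]]] .
    hence m: "Di (sig q) (0,-1) = - Di (sig q) (0,1)" using linear_neg[of "Di (sig q)" "(0,1)"] by simp
    show ?thesis unfolding Hd_def using h_cr_alg[OF ck[OF q] ck[OF sigUi[OF q]]] by (simp add: m)
  qed
  have Gder: "((\<lambda>(x, y). reg_conj f (slice_pt x y J)) has_derivative G p) (at p)
     \<and> G p (1,0) + J * G p (0,1) = 0" if p: "p \<in> UJ" for p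
  proof -
    have pi: "p \<in> Ui" using JUi[OF p] .
    have d2: "((\<lambda>p. h (sig p)) has_derivative (\<lambda>v. Hd (sig p) (sig v))) (at p)"
      by (rule sig_deriv[OF dh[OF sigUi[OF pi]]])
    have c2: "Hd (sig p) (sig (1,0)) - qi * Hd (sig p) (sig (0,1)) = 0"
      by (rule sig_anti_cr[OF dh[OF sigUi[OF pi]] ch[OF sigUi[OF pi]]])
    note E = ext_cr[OF J dh[OF pi] ch[OF pi] d2 c2]
    show ?thesis unfolding hfun G_def using E by blast
  qed
  have c10: "continuous_on UJ (\<lambda>p. Hd p (1,0))" and c01: "continuous_on UJ (\<lambda>p. Hd p (0,1))"
    and c10s: "continuous_on UJ (\<lambda>p. Hd (sig p) (1,0))" and c01s: "continuous_on UJ (\<lambda>p. Hd (sig p) (0,1))"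
  proof -
    have cs: "continuous_on UJ sig" using linear_continuous_on[OF bounded_linear_sig] continuous_on_subset by blast
    have UJUi: "UJ \<subseteq> Ui" using JUi by blast
    have sUJ: "sig ` UJ \<subseteq> Ui" using JUi sigUi by blast
    have a1: "continuous_on UJ (\<lambda>p. Di p (1,0))" using continuous_on_subset[OF Di(2)[folded Ui_def] UJUi] .
    have a2: "continuous_on UJ (\<lambda>p. Di p (0,1))" using continuous_on_subset[OF Di(3)[folded Ui_def] UJUi] .
    have b1: "continuous_on UJ (\<lambda>p. Di (sig p) (1,0))" using continuous_on_compose2[OF Di(2)[folded Ui_def] cs sUJ] .
    have b2: "continuous_on UJ (\<lambda>p. Di (sig p) (0,1))" using continuous_on_compose2[OF Di(3)[folded Ui_def] cs sUJ] .
    have lin: "linear (Di q)" if "q \<in> Ui" for q using has_derivative_linear[OF dk[OF that]] .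
    have m: "Di q (0,-1) = - Di q (0,1)" if "q \<in> Ui" for q using linear_neg[OF lin[OF that], of "(0,1)"] by simp
    show "continuous_on UJ (\<lambda>p. Hd p (1,0))"
      unfolding Hd_def by (simp only: sig_simps(1)) (intro continuous_intros cont_bl[OF bl_T1] cont_bl[OF bl_T2] a1 b1)
    show "continuous_on UJ (\<lambda>p. Hd (sig p) (1,0))"
      unfolding Hd_def by (simp only: sig_sig sig_simps(1)) (intro continuous_intros cont_bl[OF bl_T1] cont_bl[OF bl_T2] a1 b1)
    show "continuous_on UJ (\<lambda>p. Hd p (0,1))"
    proof (rule continuous_on_cong[THEN iffD2, OF refl _ continuous_on_diff[OF continuous_on_minus[OF cont_bl[OF bl_T1 b2]] cont_bl[OF bl_T2 a2]]])
      fix p assume "p \<in> UJ"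
      thus "Hd p (0,1) = - T1 (Di (sig p) (0,1)) - T2 (Di p (0,1))"
        unfolding Hd_def using m[OF sigUi[OF JUi]] linear_neg[OF bl_T1[THEN bounded_linear.linear]] by simp
    qed
    show "continuous_on UJ (\<lambda>p. Hd (sig p) (0,1))"
    proof (rule continuous_on_cong[THEN iffD2, OF refl _ continuous_on_diff[OF continuous_on_minus[OF cont_bl[OF bl_T1 a2]] cont_bl[OF bl_T2 b2]]])
      fix p assume "p \<in> UJ"
      thus "Hd (sig p) (0,1) = - T1 (Di p (0,1)) - T2 (Di (sig p) (0,1))"
        unfolding Hd_def using m[OF JUi] linear_neg[OF bl_T1[THEN bounded_linear.linear]] by simp
    qed
  qed
  show "\<exists>D. (\<forall>p\<in>{(x, y). slice_pt x y J \<in> \<Omega>}. ((\<lambda>(x, y). reg_conj f (slice_pt x y J)) has_derivative D p) (at p)) \<and>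
          continuous_on {(x, y). slice_pt x y J \<in> \<Omega>} (\<lambda>p. D p (1, 0)) \<and>
          continuous_on {(x, y). slice_pt x y J \<in> \<Omega>} (\<lambda>p. D p (0, 1)) \<and>
          (\<forall>p\<in>{(x, y). slice_pt x y J \<in> \<Omega>}. (1/2) *\<^sub>R (D p (1, 0) + J * D p (0, 1)) = 0)"
  proof (intro exI[of _ G] conjI ballI)
    fix p assume "p \<in> {(x, y). slice_pt x y J \<in> \<Omega>}"
    hence p: "p \<in> UJ" by (simp add: UJ_def)
    show "((\<lambda>(x, y). reg_conj f (slice_pt x y J)) has_derivative G p) (at p)" using Gder[OF p] by blast
    show "(1/2) *\<^sub>R (G p (1, 0) + J * G p (0, 1)) = 0" using Gder[OF p] by simp
  next
    show "continuous_on {(x, y). slice_pt x y J \<in> \<Omega>} (\<lambda>p. G p (1, 0))"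
      unfolding UJ_def[symmetric] G_def
      by (simp only: sig_sig sig_simps(1))
         (intro continuous_intros cont_bl[OF bounded_linear_qmult_left] c10 c10s)
  next
    have mH: "Hd (sig p) (0,-1) = - Hd (sig p) (0,1)" if "p \<in> UJ" for p
      using linear_neg[OF has_derivative_linear[OF dh[OF sigUi[OF JUi[OF that]]]], of "(0,1)"] by simp
    have cc: "continuous_on UJ (\<lambda>p. (1/2) *\<^sub>R (Hd p (0,1) + - Hd (sig p) (0,1)) + (1/2) *\<^sub>R (J * qi * (- Hd (sig p) (0,1) - Hd p (0,1))))"
      by (intro continuous_intros cont_bl[OF bounded_linear_qmult_left] c01 c01s)
    show "continuous_on {(x, y). slice_pt x y J \<in> \<Omega>} (\<lambda>p. G p (0, 1))"
      unfolding UJ_def[symmetric]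
    proof (rule continuous_on_cong[THEN iffD2, OF refl _ cc])
      fix p assume "p \<in> UJ"
      thus "G p (0,1) = (1/2) *\<^sub>R (Hd p (0,1) + - Hd (sig p) (0,1)) + (1/2) *\<^sub>R (J * qi * (- Hd (sig p) (0,1) - Hd p (0,1)))"
        unfolding G_def using mH by simp
    qed
  qed
qed



definition alpha :: "(quat \<Rightarrow> quat) \<Rightarrow> real \<Rightarrow> real \<Rightarrow> quat" where
  "alpha f x y = (1/2) *\<^sub>R (f (slice_pt x y qi) + f (slice_pt x (-y) qi))"
definition beta :: "(quat \<Rightarrow> quat) \<Rightarrow> real \<Rightarrow> real \<Rightarrow> quat" where
  "beta f x y = (1/2) *\<^sub>R (qi * (f (slice_pt x (-y) qi) - f (slice_pt x y qi)))"

lemma repr_ab: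
  assumes "symmetric_slice_domain \<Omega>" "slice_regular \<Omega> f" "J \<in> imag_units" "slice_pt x y J \<in> \<Omega>"
  shows "f (slice_pt x y J) = alpha f x y + J * beta f x y"
  unfolding repr_formula[OF assms] alpha_def beta_def by (simp add: mult.assoc)

lemma conj_ab:
  assumes J: "J \<in> imag_units"
  shows "reg_conj f (slice_pt x y J) = qcnj (alpha f x y) + J * qcnj (beta f x y)"
proof -
  define F1 where "F1 = f (slice_pt x y qi)"
  define F2 where "F2 = f (slice_pt x (-y) qi)"
  have a: "(1/2) *\<^sub>R ((T1 F2 - T2 F1) + (T1 F1 - T2 F2)) = qcnj ((1/2) *\<^sub>R (F1 + F2))"
    by (simp add: T1_def T2_def qcnj_def quat_eq_iff algebra_simps)
  have b: "qi * ((T1 F1 - T2 F2) - (T1 F2 - T2 F1)) = qcnj (qi * (F2 - F1))"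
    by (simp add: T1_def T2_def qcnj_def quat_eq_iff times_quat_def qi_def algebra_simps)
  have "reg_conj f (slice_pt x y J) = (1/2) *\<^sub>R ((T1 F2 - T2 F1) + (T1 F1 - T2 F2))
     + (1/2) *\<^sub>R (J * qi * ((T1 F1 - T2 F2) - (T1 F2 - T2 F1)))"
    unfolding reg_conj_slice[OF J] by (simp add: F1_def F2_def sig_def)
  also have "\<dots> = qcnj (alpha f x y) + J * qcnj (beta f x y)"
    unfolding a mult.assoc b alpha_def beta_def F1_def[symmetric] F2_def[symmetric]
    by (simp add: qcnj_scaleR)
  finally show ?thesis .
qed

definition Phi :: "quat \<Rightarrow> quat \<Rightarrow> quat" where
  "Phi b J = (if b = 0 then J else (- (1 / (norm b)\<^sup>2)) *\<^sub>R (b * J * qcnj b))"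

lemma qcnj_b: "qcnj b * b = (norm b)\<^sup>2 *\<^sub>R 1" "b * qcnj b = (norm b)\<^sup>2 *\<^sub>R 1"
  by (simp_all add: qcnj_mult_self mult_qcnj of_real_def)

lemma Phi_mult: "J \<in> imag_units \<Longrightarrow> Phi b J * b = - (b * J)"
  by (cases "b = 0") (auto simp: Phi_def mult.assoc qcnj_b)

lemma Phi_unit:
  assumes J: "J \<in> imag_units" shows "Phi b J \<in> imag_units"
proof (cases "b = 0")
  case True thus ?thesis using J by (simp add: Phi_def)
next
  case False
  hence n: "norm b \<noteq> 0" by simp
  have "(b * J * qcnj b) * (b * J * qcnj b) = b * J * (qcnj b * b) * J * qcnj b"
    by (simp add: mult.assoc)
  also have "\<dots> = (norm b)\<^sup>2 *\<^sub>R (b * (J * (J * qcnj b)))" by (simp add: qcnj_b mult.assoc)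
  also have "\<dots> = - ((norm b)\<^sup>2 *\<^sub>R (b * qcnj b))" by (simp add: imag_unit_sq[OF J])
  also have "\<dots> = - ((norm b)^4 *\<^sub>R 1)" by (simp add: qcnj_b power2_eq_square power4_eq_xxxx)
  finally have e: "(b * J * qcnj b) * (b * J * qcnj b) = - ((norm b)^4 *\<^sub>R 1)" .
  have "Phi b J * Phi b J = ((1 / (norm b)\<^sup>2) * (1 / (norm b)\<^sup>2)) *\<^sub>R ((b * J * qcnj b) * (b * J * qcnj b))"
    using False by (simp add: Phi_def)
  also have "\<dots> = - 1" unfolding e using n by (simp add: power2_eq_square power4_eq_xxxx)
  finally show ?thesis by (simp add: imag_units_def)
qed

lemma Phi_surj:
  assumes K: "K \<in> imag_units" shows "\<exists>J\<in>imag_units. Phi b J = K"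
proof (cases "b = 0")
  case True thus ?thesis using K by (auto simp: Phi_def)
next
  case False
  hence n: "norm b \<noteq> 0" by simp
  define J where "J = Phi (qcnj b) K"
  have J: "J \<in> imag_units" unfolding J_def by (rule Phi_unit[OF K])
  have "Phi b J = ((1 / (norm b)\<^sup>2) * (1 / (norm b)\<^sup>2)) *\<^sub>R ((b * qcnj b) * K * (b * qcnj b))"
    using False by (simp add: Phi_def J_def norm_qcnj mult.assoc)
  also have "\<dots> = K" using n by (simp add: qcnj_b power2_eq_square)
  finally show ?thesis using J by blast
qed

lemma Phi_inj:
  assumes "J \<in> imag_units" "J' \<in> imag_units" "Phi b J = Phi b J'"
  shows "J = J'"
proof (cases "b = 0")
  case True thus ?thesis using assms by (simp add: Phi_def)
next
  case False
  have "b * J = b * J'" using Phi_mult[OF assms(1), of b] Phi_mult[OF assms(2), of b] assms(3) by simp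
  hence "b * (J - J') = 0" by (simp add: right_diff_distrib)
  hence "norm b * norm (J - J') = 0" by (metis norm_qmult norm_zero)
  thus ?thesis using False by simp
qed



lemma key:
  assumes ssd: "symmetric_slice_domain \<Omega>" and reg: "slice_regular \<Omega> f"
    and J: "J \<in> imag_units" and p: "slice_pt x y J \<in> \<Omega>"
  shows "Phi (beta f x y) J \<in> imag_units"
    and "slice_pt x y (Phi (beta f x y) J) \<in> \<Omega>"
    and "reg_conj f (slice_pt x y J) = qcnj (f (slice_pt x y (Phi (beta f x y) J)))"
proof -
  show K: "Phi (beta f x y) J \<in> imag_units" by (rule Phi_unit[OF J])
  show pK: "slice_pt x y (Phi (beta f x y) J) \<in> \<Omega>" by (rule ssd_sym[OF ssd J K p])
  have "f (slice_pt x y (Phi (beta f x y) J)) = alpha f x y - beta f x y * J"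
    unfolding repr_ab[OF ssd reg K pK] Phi_mult[OF J] by simp
  hence "qcnj (f (slice_pt x y (Phi (beta f x y) J))) = qcnj (alpha f x y) + J * qcnj (beta f x y)"
    by (simp add: qcnj_diff qcnj_mult qcnj_imag[OF J])
  thus "reg_conj f (slice_pt x y J) = qcnj (f (slice_pt x y (Phi (beta f x y) J)))"
    by (simp add: conj_ab[OF J])
qed

lemma canon:
  obtains x y J where "J \<in> imag_units" "y \<ge> 0" "q = slice_pt x y J"
  using slice_rep[of q] by (metis norm_ge_zero)

lemma slice_pt_eq_cases:
  assumes "J \<in> imag_units" "J' \<in> imag_units" "y \<ge> 0" "y' \<ge> 0"
    and e: "slice_pt x y K = slice_pt x' y' K'"
    and "K \<in> imag_units" "K' \<in> imag_units"
    and imp: "x = x' \<Longrightarrow> y = y' \<Longrightarrow> y \<noteq> 0 \<Longrightarrow> K = K' \<Longrightarrow> J = J'"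
  shows "slice_pt x y J = slice_pt x' y' J'"
proof -
  from slice_pt_inj[OF assms(6,7,3,4) e] have "x = x'" "y = y'" "y \<noteq> 0 \<longrightarrow> K = K'" by auto
  thus ?thesis using imp by (cases "y = 0") (auto simp: slice_pt_real)
qed

theorem proposition4p10:
  fixes \<Omega>1 \<Omega>2 :: "quat set" and f :: "quat \<Rightarrow> quat"
  assumes "symmetric_slice_domain \<Omega>1" and "symmetric_slice_domain \<Omega>2"
    and "slice_regular \<Omega>1 f" and "f ` \<Omega>1 \<subseteq> \<Omega>2"
  shows "(slice_regular \<Omega>1 (reg_conj f) \<and> reg_conj f ` \<Omega>1 \<subseteq> \<Omega>2)
    \<and> (bij_betw (reg_conj f) \<Omega>1 \<Omega>2 \<longleftrightarrow> bij_betw f \<Omega>1 \<Omega>2)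
    \<and> (\<forall>x y. (\<forall>I\<in>imag_units. slice_pt x y I \<in> \<Omega>1) \<longrightarrow>
           (SUP I\<in>imag_units. ereal (norm (f (slice_pt x y I))))
             = (SUP I\<in>imag_units. ereal (norm (reg_conj f (slice_pt x y I)))) \<and>
           (INF I\<in>imag_units. ereal (norm (f (slice_pt x y I))))
             = (INF I\<in>imag_units. ereal (norm (reg_conj f (slice_pt x y I)))))
    \<and> (SUP q\<in>\<Omega>1. ereal (norm (f q))) = (SUP q\<in>\<Omega>1. ereal (norm (reg_conj f q)))
    \<and> (INF q\<in>\<Omega>1. ereal (norm (f q))) = (INF q\<in>\<Omega>1. ereal (norm (reg_conj f q)))"
proof -
  note ssd1 = assms(1) and ssd2 = assms(2) and reg = assms(3) and fim = assms(4)
  define P where "P x y = Phi (beta f x y)" for x y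
  note k1 = key(1)[OF ssd1 reg, folded P_def]
  note k2 = key(2)[OF ssd1 reg, folded P_def]
  note k3 = key(3)[OF ssd1 reg, folded P_def]
  have Psurj: "\<exists>J\<in>imag_units. P x y J = K" if "K \<in> imag_units" for x y K
    unfolding P_def by (rule Phi_surj[OF that])
  have Pinj: "J = J'" if "J \<in> imag_units" "J' \<in> imag_units" "P x y J = P x y J'" for x y J J'
    using Phi_inj that unfolding P_def by blast
  have bk: "\<exists>J\<in>imag_units. slice_pt x y J \<in> \<Omega>1 \<and> reg_conj f (slice_pt x y J) = qcnj (f (slice_pt x y K))"
    if KK: "K \<in> imag_units" "slice_pt x y K \<in> \<Omega>1" for x y K
  proof -
    obtain J where J: "J \<in> imag_units" "P x y J = K" using Psurj[OF KK(1)] by blast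
    have pJ: "slice_pt x y J \<in> \<Omega>1" by (rule ssd_sym[OF ssd1 KK(1) J(1) KK(2)])
    show ?thesis using k3[OF J(1) pJ] J pJ by auto
  qed
  have img: "reg_conj f ` \<Omega>1 \<subseteq> \<Omega>2"
  proof
    fix p assume "p \<in> reg_conj f ` \<Omega>1"
    then obtain q where q: "q \<in> \<Omega>1" "p = reg_conj f q" by blast
    obtain x y J where J: "J \<in> imag_units" "y \<ge> 0" "q = slice_pt x y J" by (rule canon)
    have "f (slice_pt x y (P x y J)) \<in> \<Omega>2" using fim k2[OF J(1)] q J by blast
    thus "p \<in> \<Omega>2" using qcnj_in[OF ssd2] k3[OF J(1)] q J by metis
  qed
  have part1: "slice_regular \<Omega>1 (reg_conj f) \<and> reg_conj f ` \<Omega>1 \<subseteq> \<Omega>2"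
    using reg_conj_regular[OF ssd1 reg] img by blast
  have sphere: "(\<lambda>I. ereal (norm (f (slice_pt x y I)))) ` imag_units
      = (\<lambda>I. ereal (norm (reg_conj f (slice_pt x y I)))) ` imag_units"
    if all: "\<forall>I\<in>imag_units. slice_pt x y I \<in> \<Omega>1" for x y
  proof safe
    fix K assume K: "K \<in> imag_units"
    obtain J where "J \<in> imag_units" "reg_conj f (slice_pt x y J) = qcnj (f (slice_pt x y K))"
      using bk[OF K] all K by blast
    thus "ereal (norm (f (slice_pt x y K))) \<in> (\<lambda>I. ereal (norm (reg_conj f (slice_pt x y I)))) ` imag_units"
      by (metis (no_types, lifting) image_eqI norm_qcnj)
  next
    fix J assume J: "J \<in> imag_units"
    have "ereal (norm (reg_conj f (slice_pt x y J))) = ereal (norm (f (slice_pt x y (P x y J))))"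
      using k3[OF J] all J by (simp add: norm_qcnj)
    thus "ereal (norm (reg_conj f (slice_pt x y J))) \<in> (\<lambda>I. ereal (norm (f (slice_pt x y I)))) ` imag_units"
      using k1[OF J] all J by blast
  qed
  have whole: "(\<lambda>q. ereal (norm (f q))) ` \<Omega>1 = (\<lambda>q. ereal (norm (reg_conj f q))) ` \<Omega>1"
  proof safe
    fix q assume q: "q \<in> \<Omega>1"
    obtain x y K where K: "K \<in> imag_units" "y \<ge> 0" "q = slice_pt x y K" by (rule canon)
    obtain J where "J \<in> imag_units" "slice_pt x y J \<in> \<Omega>1" "reg_conj f (slice_pt x y J) = qcnj (f q)"
      using bk[OF K(1)] q K by blast
    thus "ereal (norm (f q)) \<in> (\<lambda>q. ereal (norm (reg_conj f q))) ` \<Omega>1"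
      by (metis (no_types, lifting) image_eqI norm_qcnj)
  next
    fix q assume q: "q \<in> \<Omega>1"
    obtain x y J where J: "J \<in> imag_units" "y \<ge> 0" "q = slice_pt x y J" by (rule canon)
    have "ereal (norm (reg_conj f q)) = ereal (norm (f (slice_pt x y (P x y J))))"
      using k3[OF J(1)] q J by (simp add: norm_qcnj)
    thus "ereal (norm (reg_conj f q)) \<in> (\<lambda>q. ereal (norm (f q))) ` \<Omega>1"
      using k2[OF J(1)] q J by blast
  qed
  have bij: "bij_betw (reg_conj f) \<Omega>1 \<Omega>2 \<longleftrightarrow> bij_betw f \<Omega>1 \<Omega>2"
  proof
    assume b: "bij_betw (reg_conj f) \<Omega>1 \<Omega>2"
    show "bij_betw f \<Omega>1 \<Omega>2"
      unfolding bij_betw_def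
    proof
      show "inj_on f \<Omega>1"
      proof (rule inj_onI)
        fix q1 q2 assume q: "q1 \<in> \<Omega>1" "q2 \<in> \<Omega>1" "f q1 = f q2"
        obtain x1 y1 K1 where K1: "K1 \<in> imag_units" "y1 \<ge> 0" "q1 = slice_pt x1 y1 K1" by (rule canon)
        obtain x2 y2 K2 where K2: "K2 \<in> imag_units" "y2 \<ge> 0" "q2 = slice_pt x2 y2 K2" by (rule canon)
        obtain J1 where J1: "J1 \<in> imag_units" "P x1 y1 J1 = K1" using Psurj[OF K1(1)] by blast
        obtain J2 where J2: "J2 \<in> imag_units" "P x2 y2 J2 = K2" using Psurj[OF K2(1)] by blast
        have p1: "slice_pt x1 y1 J1 \<in> \<Omega>1" using ssd_sym[OF ssd1 K1(1) J1(1)] q K1 by blast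
        have p2: "slice_pt x2 y2 J2 \<in> \<Omega>1" using ssd_sym[OF ssd1 K2(1) J2(1)] q K2 by blast
        have "reg_conj f (slice_pt x1 y1 J1) = reg_conj f (slice_pt x2 y2 J2)"
          using k3[OF J1(1) p1] k3[OF J2(1) p2] J1 J2 K1 K2 q by simp
        hence e: "slice_pt x1 y1 J1 = slice_pt x2 y2 J2"
          using b p1 p2 unfolding bij_betw_def inj_on_def by blast
        show "q1 = q2" unfolding K1(3) K2(3)
          by (rule slice_pt_eq_cases[OF K1(1) K2(1) K1(2) K2(2) e J1(1) J2(1)]) (use J1 J2 in blast)
      qed
      show "f ` \<Omega>1 = \<Omega>2"
      proof
        show "f ` \<Omega>1 \<subseteq> \<Omega>2" by (rule fim)
        show "\<Omega>2 \<subseteq> f ` \<Omega>1"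
        proof
          fix p assume p: "p \<in> \<Omega>2"
          hence "qcnj p \<in> reg_conj f ` \<Omega>1" using qcnj_in[OF ssd2 p] b unfolding bij_betw_def by blast
          then obtain q where q: "q \<in> \<Omega>1" "qcnj p = reg_conj f q" by blast
          obtain x y J where J: "J \<in> imag_units" "y \<ge> 0" "q = slice_pt x y J" by (rule canon)
          have "p = f (slice_pt x y (P x y J))"
            using k3[OF J(1)] q J by (metis qcnj_qcnj)
          thus "p \<in> f ` \<Omega>1" using k2[OF J(1)] q J by blast
        qed
      qed
    qed
  next
    assume b: "bij_betw f \<Omega>1 \<Omega>2"
    show "bij_betw (reg_conj f) \<Omega>1 \<Omega>2"
      unfolding bij_betw_def
    proof
      show "inj_on (reg_conj f) \<Omega>1"
      proof (rule inj_onI)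
        fix q1 q2 assume q: "q1 \<in> \<Omega>1" "q2 \<in> \<Omega>1" "reg_conj f q1 = reg_conj f q2"
        obtain x1 y1 J1 where J1: "J1 \<in> imag_units" "y1 \<ge> 0" "q1 = slice_pt x1 y1 J1" by (rule canon)
        obtain x2 y2 J2 where J2: "J2 \<in> imag_units" "y2 \<ge> 0" "q2 = slice_pt x2 y2 J2" by (rule canon)
        have p1: "slice_pt x1 y1 (P x1 y1 J1) \<in> \<Omega>1" using k2[OF J1(1)] q J1 by blast
        have p2: "slice_pt x2 y2 (P x2 y2 J2) \<in> \<Omega>1" using k2[OF J2(1)] q J2 by blast
        have "qcnj (f (slice_pt x1 y1 (P x1 y1 J1))) = qcnj (f (slice_pt x2 y2 (P x2 y2 J2)))"
          using k3[OF J1(1)] k3[OF J2(1)] q J1 J2 by metis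
        hence "f (slice_pt x1 y1 (P x1 y1 J1)) = f (slice_pt x2 y2 (P x2 y2 J2))"
          by (metis qcnj_qcnj)
        hence e: "slice_pt x1 y1 (P x1 y1 J1) = slice_pt x2 y2 (P x2 y2 J2)"
          using b p1 p2 unfolding bij_betw_def inj_on_def by blast
        show "q1 = q2" unfolding J1(3) J2(3)
        proof (rule slice_pt_eq_cases[OF J1(1) J2(1) J1(2) J2(2) e k1[OF J1(1)] k1[OF J2(1)]])
          show "slice_pt x1 y1 J1 \<in> \<Omega>1" "slice_pt x2 y2 J2 \<in> \<Omega>1" using q J1 J2 by auto
          show "J1 = J2" if "x1 = x2" "y1 = y2" "P x1 y1 J1 = P x2 y2 J2"
            using Pinj[OF J1(1) J2(1)] that by blast
        qed
      qed
      show "reg_conj f ` \<Omega>1 = \<Omega>2"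
      proof
        show "reg_conj f ` \<Omega>1 \<subseteq> \<Omega>2" by (rule img)
        show "\<Omega>2 \<subseteq> reg_conj f ` \<Omega>1"
        proof
          fix p assume p: "p \<in> \<Omega>2"
          hence "qcnj p \<in> f ` \<Omega>1" using qcnj_in[OF ssd2 p] b unfolding bij_betw_def by blast
          then obtain q where q: "q \<in> \<Omega>1" "qcnj p = f q" by blast
          obtain x y K where K: "K \<in> imag_units" "y \<ge> 0" "q = slice_pt x y K" by (rule canon)
          obtain J where J: "J \<in> imag_units" "slice_pt x y J \<in> \<Omega>1" "reg_conj f (slice_pt x y J) = qcnj (f q)"
            using bk[OF K(1)] q K by blast
          hence "reg_conj f (slice_pt x y J) = p" using q by (metis qcnj_qcnj)
          thus "p \<in> reg_conj f ` \<Omega>1" using J by blast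
        qed
      qed
    qed
  qed
  show ?thesis
    using part1 bij sphere whole by simp
qed


end
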